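(* Let $x,y\in W_0^J$ and let $\sigma\in\mathbb{Q}$ with $0<\sigma<1$. Assume there is a directed $\sigma$-path $x=w_0\xleftarrow{\beta_1}w_1\xleftarrow{\beta_2}\cdots\xleftarrow{\beta_n}w_n=y$ from $y$ to $x$ in the parabolic quantum Bruhat graph. Then $\sigma(x\Lambda-y\Lambda)\in Q_0:=\bigoplus_{j\in I_0}\mathbb{Z}\alpha_j$.
   Context: Let $\Delta_0$ be the finite root system (simple roots $\alpha_j$, coroots $\alpha_j^\vee$, $j\in I_0$) of the finite-dimensional simple Lie algebra underlying an untwisted affine Lie algebra, with positive roots $\Delta_0^+$ and Weyl group $W_0$ generated by simple reflections $r_j$. Let $\lambda=\sum_{i\in I_0}m_i\varpi_i$ ($m_i\in\mathbb{Z}_{\ge0}$) be a level-zero dominant integral weight and $\Lambda$ its class modulo $\mathbb{C}\delta$, with $\langle\Lambda,\alpha_j^\vee\rangle=m_j$ and $W_0$ acting on it. Let $J=\{j\in I_0\mid m_j=0\}$, $W_J=\langle r_j\mid j\in J\rangle$, $\Delta_J^+=\Delta_0^+\cap\bigoplus_{j\in J}\mathbb{Z}\alpha_j$, $W_0^J$ the minimal-length representatives of $W_0/W_J$, $\lfloor w\rfloor$ the representative of $wW_J$, $\ell$ the length, $\rho$, $\rho_J$ the half-sums of positive roots of $\Delta_0$, $\Delta_J$. The parabolic quantum Bruhat graph has vertices $W_0^J$ and an edge $\lfloor wr_\beta\rfloor\xleftarrow{\beta}w$ for $w\in W_0^J$, $\beta\in\Delta_0^+\setminus\Delta_J^+$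 whenever $\ell(\lfloor wr_\beta\rfloor)=\ell(w)+1$ or $\ell(\lfloor wr_\beta\rfloor)=\ell(w)-2\langle\rho-\rho_J,\beta^\vee\rangle+1$. A directed path from $y$ to $x$ is a chain of edges $x=w_0\xleftarrow{\beta_1}w_1\xleftarrow{}\cdots\xleftarrow{\beta_n}w_n=y$; it is a directed $\sigma$-path if $\sigma\langle\Lambda,\beta_k^\vee\rangle\in\mathbb{Z}$ for all $1\le k\le n$. *)

theory Defs
  imports "HOL-Analysis.Analysis"
begin

definition coroot :: "'a::euclidean_space \<Rightarrow> 'a" where
  "coroot b = (2 / (b \<bullet> b)) *\<^sub>R b"

definition pair :: "'a::euclidean_space \<Rightarrow> 'a \<Rightarrow> real" where
  "pair v b = v \<bullet> coroot b"

definition refl :: "'a::euclidean_space \<Rightarrow> 'a \<Rightarrow> 'a" where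
  "refl b v = v - pair v b *\<^sub>R b"

definition root_system :: "'a::euclidean_space set \<Rightarrow> bool" where
  "root_system R \<longleftrightarrow> finite R \<and> 0 \<notin> R \<and> span R = UNIV
     \<and> (\<forall>a\<in>R. \<forall>b\<in>R. refl a b \<in> R \<and> pair b a \<in> \<int>)
     \<and> (\<forall>a\<in>R. \<forall>c. c *\<^sub>R a \<in> R \<longrightarrow> c = 1 \<or> c = -1)"

definition irreducible_rs :: "'a::euclidean_space set \<Rightarrow> bool" where
  "irreducible_rs R \<longleftrightarrow> \<not> (\<exists>A B. A \<union> B = R \<and> A \<inter> B = {} \<and> A \<noteq> {} \<and> B \<noteq> {}
      \<and> (\<forall>a\<in>A. \<forall>b\<in>B. a \<bullet> b = 0))"

definition int_comb :: "'a::euclidean_space set \<Rightarrow> 'a \<Rightarrow> (int \<Rightarrow> bool) \<Rightarrow> bool" where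
  "int_comb X v P \<longleftrightarrow> (\<exists>c :: 'a \<Rightarrow> int. v = (\<Sum>s\<in>X. of_int (c s) *\<^sub>R s) \<and> (\<forall>s\<in>X. P (c s)))"

definition root_lattice :: "'a::euclidean_space set \<Rightarrow> 'a set" where
  "root_lattice S = {v. int_comb S v (\<lambda>_. True)}"

definition simple_system :: "'a::euclidean_space set \<Rightarrow> 'a set \<Rightarrow> bool" where
  "simple_system R S \<longleftrightarrow> S \<subseteq> R \<and> independent S
     \<and> (\<forall>b\<in>R. int_comb S b (\<lambda>n. n \<ge> 0) \<or> int_comb S b (\<lambda>n. n \<le> 0))"

definition pos_roots :: "'a::euclidean_space set \<Rightarrow> 'a set \<Rightarrow> 'a set" where
  "pos_roots R S = {b\<in>R. int_comb S b (\<lambda>n. n \<ge> 0)}"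

definition pos_roots_J :: "'a::euclidean_space set \<Rightarrow> 'a set \<Rightarrow> 'a set \<Rightarrow> 'a set" where
  "pos_roots_J R S J = {b\<in>pos_roots R S. int_comb J b (\<lambda>_. True)}"

definition rho :: "'a::euclidean_space set \<Rightarrow> 'a" where
  "rho X = (1/2) *\<^sub>R (\<Sum>b\<in>X. b)"

definition word_fun :: "'a::euclidean_space list \<Rightarrow> 'a \<Rightarrow> 'a" where
  "word_fun ws = foldr (\<lambda>s f. refl s \<circ> f) ws id"

definition weyl :: "'a::euclidean_space set \<Rightarrow> ('a \<Rightarrow> 'a) set" where
  "weyl S = {word_fun ws | ws. set ws \<subseteq> S}"

definition wlen :: "'a::euclidean_space set \<Rightarrow> ('a \<Rightarrow> 'a) \<Rightarrow> nat" where
  "wlen S w = (LEAST n. \<exists>ws. set ws \<subseteq> S \<and> length ws = n \<and> word_fun ws = w)"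

definition minreps :: "'a::euclidean_space set \<Rightarrow> 'a set \<Rightarrow> ('a \<Rightarrow> 'a) set" where
  "minreps S J = {w \<in> weyl S. \<forall>u\<in>weyl J. wlen S w \<le> wlen S (w \<circ> u)}"

definition floorJ :: "'a::euclidean_space set \<Rightarrow> 'a set \<Rightarrow> ('a \<Rightarrow> 'a) \<Rightarrow> ('a \<Rightarrow> 'a)" where
  "floorJ S J w = (THE u. u \<in> minreps S J \<and> u \<in> (\<lambda>v. w \<circ> v) ` weyl J)"

text \<open>Edge  u <--beta-- w  of the parabolic quantum Bruhat graph.\<close>
definition qbg_edge :: "'a::euclidean_space set \<Rightarrow> 'a set \<Rightarrow> 'a set \<Rightarrow>
    ('a \<Rightarrow> 'a) \<Rightarrow> 'a \<Rightarrow> ('a \<Rightarrow> 'a) \<Rightarrow> bool" where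
  "qbg_edge R S J u b w \<longleftrightarrow> w \<in> minreps S J \<and> b \<in> pos_roots R S - pos_roots_J R S J
     \<and> u = floorJ S J (w \<circ> refl b)
     \<and> (wlen S u = wlen S w + 1
        \<or> real (wlen S u) = real (wlen S w)
             - 2 * pair (rho (pos_roots R S) - rho (pos_roots_J R S J)) b + 1)"

text \<open>Directed path x = ws!0 <--bs!0-- ws!1 <-- ... <--bs!(n-1)-- ws!n = y.\<close>
definition qbg_path :: "'a::euclidean_space set \<Rightarrow> 'a set \<Rightarrow> 'a set \<Rightarrow>
    ('a \<Rightarrow> 'a) list \<Rightarrow> 'a list \<Rightarrow> bool" where
  "qbg_path R S J ws bs \<longleftrightarrow> length ws = Suc (length bs)
     \<and> (\<forall>k < length bs. qbg_edge R S J (ws ! k) (bs ! k) (ws ! Suc k))"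

end

theory Submission
  imports Defs
begin

locale rsys =
  fixes R S :: "'a::euclidean_space set"
  assumes rs: "root_system R" and ss: "simple_system R S"
begin

definition lin :: "('a \<Rightarrow> int) \<Rightarrow> 'a" where
  "lin c = (\<Sum>s\<in>S. of_int (c s) *\<^sub>R s)"

definition pos where "pos x \<longleftrightarrow> int_comb S x (\<lambda>n. n \<ge> 0)"
definition neg where "neg x \<longleftrightarrow> int_comb S x (\<lambda>n. n \<le> 0)"

lemma finR: "finite R" and zR: "0 \<notin> R"
  and reflR: "a \<in> R \<Longrightarrow> b \<in> R \<Longrightarrow> refl a b \<in> R"
  and pairZ: "a \<in> R \<Longrightarrow> b \<in> R \<Longrightarrow> pair b a \<in> \<int>"
  and mult: "a \<in> R \<Longrightarrow> c *\<^sub>R a \<in> R \<Longrightarrow> c = 1 \<or> c = -1"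
  using rs unfolding root_system_def by auto

lemma SR: "S \<subseteq> R" and indS: "independent S"
  and posneg: "b \<in> R \<Longrightarrow> pos b \<or> neg b"
  using ss unfolding simple_system_def pos_def neg_def by auto

lemma finS: "finite S" using SR finR finite_subset by blast

lemma lin_unique:
  assumes "lin c = lin d" "s \<in> S" shows "c s = d s"
proof (rule ccontr)
  assume ne: "c s \<noteq> d s"
  have "(\<Sum>v\<in>S. real_of_int (c v - d v) *\<^sub>R v) = lin c - lin d"
    unfolding lin_def by (simp add: sum_subtractf scaleR_diff_left)
  also have "\<dots> = 0" using assms by simp
  finally have "dependent S"
    using ne assms(2) finS
    by (subst real_vector.dependent_finite[OF finS]) (rule exI[of _ "\<lambda>v. real_of_int (c v - d v)"], auto)
  with indS show False by simp
qed

lemma pos_lin: "pos x \<longleftrightarrow> (\<exists>c. x = lin c \<and> (\<forall>s\<in>S. c s \<ge> 0))"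
  unfolding pos_def int_comb_def lin_def by simp
lemma neg_lin: "neg x \<longleftrightarrow> (\<exists>c. x = lin c \<and> (\<forall>s\<in>S. c s \<le> 0))"
  unfolding neg_def int_comb_def lin_def by simp

lemma pos_neg_zero: assumes "pos x" "neg x" shows "x = 0"
proof -
  obtain c d where c: "x = lin c" "\<forall>s\<in>S. c s \<ge> 0" and d: "x = lin d" "\<forall>s\<in>S. d s \<le> 0"
    using assms pos_lin neg_lin by metis
  have "\<forall>s\<in>S. c s = 0" using lin_unique[of c d] c d by force
  then show ?thesis using c unfolding lin_def by simp
qed

lemma not_pos_neg: "x \<in> R \<Longrightarrow> pos x \<Longrightarrow> neg x \<Longrightarrow> False"
  using pos_neg_zero zR by blast

lemma sum_delta_S: "a \<in> S \<Longrightarrow> (\<Sum>t\<in>S. of_int (if t = a then k else 0) *\<^sub>R t) = of_int k *\<^sub>R a"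
proof -
  assume a: "a \<in> S"
  have eq: "(\<lambda>t. of_int (if t = a then k else 0) *\<^sub>R t) = (\<lambda>t. if t = a then of_int k *\<^sub>R a else (0::'a))"
    by auto
  show ?thesis unfolding eq using a finS by (simp only: sum.delta) simp
qed

lemma lin_delta: "s \<in> S \<Longrightarrow> lin (\<lambda>t. if t = s then 1 else 0) = s"
  unfolding lin_def using sum_delta_S[of s 1] by simp

lemma simple_pos: "s \<in> S \<Longrightarrow> pos s"
  unfolding pos_lin by (rule exI[of _ "\<lambda>t. if t = s then 1 else 0"]) (simp add: lin_delta)

lemma lin_minus_delta: "a \<in> S \<Longrightarrow> lin c - of_int k *\<^sub>R a = lin (\<lambda>t. c t - (if t = a then k else 0))"
proof -
  assume a: "a \<in> S"
  have "lin (\<lambda>t. c t - (if t = a then k else 0)) = lin c - (\<Sum>t\<in>S. of_int (if t = a then k else 0) *\<^sub>R t)"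
    unfolding lin_def by (simp add: sum_subtractf scaleR_diff_left)
  also have "(\<Sum>t\<in>S. of_int (if t = a then k else 0) *\<^sub>R t) = of_int k *\<^sub>R a"
    using a by (rule sum_delta_S)
  finally show ?thesis by simp
qed

end


lemma refl_eq: "refl b v = v - (2 * (v \<bullet> b) / (b \<bullet> b)) *\<^sub>R b"
  unfolding refl_def pair_def coroot_def by (simp add: inner_commute)

lemma pair_eq: "pair v b = 2 * (v \<bullet> b) / (b \<bullet> b)"
  unfolding pair_def coroot_def by simp

lemma refl_linear: "linear (refl b)"
  unfolding refl_eq
  by (rule linearI) (auto simp: inner_add_left algebra_simps add_divide_distrib scaleR_add_left diff_divide_distrib)

lemma refl_inner: "refl b x \<bullet> refl b y = x \<bullet> y"
proof (cases "b \<bullet> b = 0")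
  case True then show ?thesis by (simp add: refl_eq)
next
  case False
  then show ?thesis unfolding refl_eq
    by (simp add: inner_diff_left inner_diff_right field_simps inner_commute power2_eq_square)
qed

lemma refl_invol: "refl b (refl b x) = x"
proof (cases "b \<bullet> b = 0")
  case True then show ?thesis by (simp add: refl_eq)
next
  case False
  have "refl b (refl b x) = x - (2 * (x \<bullet> b) / (b \<bullet> b)) *\<^sub>R b - (2 * ((x - (2 * (x \<bullet> b) / (b \<bullet> b)) *\<^sub>R b) \<bullet> b) / (b \<bullet> b)) *\<^sub>R b"
    by (simp add: refl_eq)
  also have "(2 * ((x - (2 * (x \<bullet> b) / (b \<bullet> b)) *\<^sub>R b) \<bullet> b) / (b \<bullet> b)) = - (2 * (x \<bullet> b) / (b \<bullet> b))"
    using False by (simp add: inner_diff_left field_simps)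
  finally show ?thesis by simp
qed

lemma refl_self: "b \<noteq> 0 \<Longrightarrow> refl b b = - b"
  by (simp add: refl_eq scaleR_2)

lemma word_fun_Nil[simp]: "word_fun [] = id"
  by (simp add: word_fun_def)
lemma word_fun_Cons[simp]: "word_fun (a # ws) = refl a \<circ> word_fun ws"
  by (simp add: word_fun_def)
lemma word_fun_append: "word_fun (xs @ ys) = word_fun xs \<circ> word_fun ys"
  by (induction xs) auto

lemma word_linear: "linear (word_fun ws)"
proof (induction ws)
  case Nil then show ?case using linear_id by (simp add: id_def)
next
  case (Cons a ws) then show ?case using linear_compose[OF Cons refl_linear[of a]] by (simp add: o_def)
qed

lemma word_inner: "word_fun ws x \<bullet> word_fun ws y = x \<bullet> y"
  by (induction ws arbitrary: x y) (auto simp: refl_inner)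

lemma word_pair: "pair (word_fun ws x) (word_fun ws a) = pair x a"
  by (simp add: pair_eq word_inner)

lemma word_conj: "refl (word_fun ws a) (word_fun ws x) = word_fun ws (refl a x)"
proof -
  have l: "linear (word_fun ws)" by (rule word_linear)
  show ?thesis
    by (simp add: refl_def word_pair linear_diff[OF l] linear_scale[OF l])
qed

lemma word_rev_inv1: "word_fun ws (word_fun (rev ws) x) = x"
  by (induction ws arbitrary: x) (auto simp: word_fun_append refl_invol)
lemma word_rev_inv2: "word_fun (rev ws) (word_fun ws x) = x"
  using word_rev_inv1[of "rev ws"] by simp


lemma sum_delta_gen: "finite X \<Longrightarrow> a \<in> X \<Longrightarrow> (\<Sum>t\<in>X. of_int (if t = a then k else 0) *\<^sub>R t) = of_int k *\<^sub>R (a::'a::real_vector)"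
proof -
  assume a: "finite X" "a \<in> X"
  have eq: "(\<lambda>t. of_int (if t = a then k else 0) *\<^sub>R t) = (\<lambda>t. if t = a then of_int k *\<^sub>R a else (0::'a))"
    by auto
  show ?thesis unfolding eq using a by (simp only: sum.delta) simp
qed

lemma wlen_le: "set ws \<subseteq> X \<Longrightarrow> wlen X (word_fun ws) \<le> length ws"
  unfolding wlen_def by (rule Least_le) blast

lemma wlen_ex: "w \<in> weyl X \<Longrightarrow> \<exists>ws. set ws \<subseteq> X \<and> length ws = wlen X w \<and> word_fun ws = w"
  unfolding wlen_def weyl_def by (rule LeastI_ex) blast

lemma weyl_word: "set ws \<subseteq> X \<Longrightarrow> word_fun ws \<in> weyl X"
  unfolding weyl_def by blast

lemma weyl_comp: "u \<in> weyl X \<Longrightarrow> v \<in> weyl X \<Longrightarrow> u \<circ> v \<in> weyl X"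
proof -
  assume "u \<in> weyl X" "v \<in> weyl X"
  then obtain us vs where "set us \<subseteq> X" "u = word_fun us" "set vs \<subseteq> X" "v = word_fun vs"
    unfolding weyl_def by blast
  then have "u \<circ> v = word_fun (us @ vs)" "set (us @ vs) \<subseteq> X" by (auto simp: word_fun_append)
  then show ?thesis unfolding weyl_def by blast
qed

lemma weyl_mono: "X \<subseteq> Y \<Longrightarrow> u \<in> weyl X \<Longrightarrow> u \<in> weyl Y"
  unfolding weyl_def by blast

lemma id_weyl: "id \<in> weyl X"
  using weyl_word[of "[]" X] by simp

context rsys
begin

lemma word_R: "set ws \<subseteq> S \<Longrightarrow> x \<in> R \<Longrightarrow> word_fun ws x \<in> R"
  by (induction ws) (use SR reflR in auto)

lemma weyl_R: "w \<in> weyl S \<Longrightarrow> x \<in> R \<Longrightarrow> w x \<in> R"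
  unfolding weyl_def using word_R by blast

lemma weyl_linear: "w \<in> weyl X \<Longrightarrow> linear w"
  unfolding weyl_def using word_linear by blast

lemma refl_lin:
  assumes "a \<in> S" "x \<in> R" "x = lin c"
  obtains k where "refl a x = lin (\<lambda>t. c t - (if t = a then k else 0))" "pair x a = of_int k"
proof -
  have "pair x a \<in> \<int>" using assms SR pairZ by auto
  then obtain k where k: "pair x a = of_int k" by (metis Ints_cases)
  have "refl a x = lin c - of_int k *\<^sub>R a" using assms k by (simp add: refl_def)
  also have "\<dots> = lin (\<lambda>t. c t - (if t = a then k else 0))" using lin_minus_delta assms by simp
  finally show ?thesis using that k by blast
qed

lemma lemK:
  assumes a: "a \<in> S" and g: "g \<in> R" "pos g" "g \<noteq> a"
  shows "pos (refl a g)"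
proof (rule ccontr)
  assume np: "\<not> pos (refl a g)"
  obtain c where c: "g = lin c" "\<forall>s\<in>S. c s \<ge> 0" using g pos_lin by metis
  obtain k where k: "refl a g = lin (\<lambda>t. c t - (if t = a then k else 0))"
    using refl_lin[OF a g(1) c(1)] by blast
  have "refl a g \<in> R" using a SR g reflR by auto
  then have "neg (refl a g)" using posneg np by blast
  then obtain d where d: "refl a g = lin d" "\<forall>s\<in>S. d s \<le> 0" using neg_lin by metis
  have z: "\<forall>t\<in>S. t \<noteq> a \<longrightarrow> c t = 0"
  proof (intro ballI impI)
    fix t assume "t \<in> S" "t \<noteq> a"
    then have "c t - (if t = a then k else 0) = d t" using lin_unique[of _ d t] k d by metis
    then show "c t = 0" using c d \<open>t \<in> S\<close> \<open>t \<noteq> a\<close> by force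
  qed
  have "lin c = lin (\<lambda>t. if t = a then c a else 0)"
    unfolding lin_def by (rule sum.cong) (use z in auto)
  also have "\<dots> = of_int (c a) *\<^sub>R a" unfolding lin_def using sum_delta_gen[OF finS a] by simp
  finally have gq: "g = of_int (c a) *\<^sub>R a" using c by simp
  then have "of_int (c a) = (1::real) \<or> of_int (c a) = (-1::real)" using mult[of a] a SR g by auto
  then have "c a = 1" using c a by force
  then show False using gq g by simp
qed

lemma deletion:
  assumes "set ws \<subseteq> S" "s \<in> S" "\<not> pos (word_fun ws s)"
  shows "\<exists>i<length ws. word_fun ws \<circ> refl s = word_fun (take i ws @ drop (Suc i) ws)"
  using assms
proof (induction ws)
  case Nil then show ?case using simple_pos by simp
next
  case (Cons a rest)
  show ?case
  proof (cases "pos (word_fun rest s)")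
    case False
    have "\<exists>i<length rest. word_fun rest \<circ> refl s = word_fun (take i rest @ drop (Suc i) rest)"
      by (rule Cons.IH) (use Cons.prems False in auto)
    then obtain i where i: "i < length rest" "word_fun rest \<circ> refl s = word_fun (take i rest @ drop (Suc i) rest)"
      by blast
    show ?thesis
    proof (rule exI[of _ "Suc i"], intro conjI)
      have "word_fun (a # rest) \<circ> refl s = refl a \<circ> (word_fun rest \<circ> refl s)"
        by (simp only: word_fun_Cons comp_assoc)
      also have "\<dots> = word_fun (a # (take i rest @ drop (Suc i) rest))"
        by (simp only: i(2) word_fun_Cons)
      also have "a # (take i rest @ drop (Suc i) rest) = take (Suc i) (a # rest) @ drop (Suc (Suc i)) (a # rest)"
        by simp
      finally show "word_fun (a # rest) \<circ> refl s = word_fun (take (Suc i) (a # rest) @ drop (Suc (Suc i)) (a # rest))" .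
    qed (use i in simp)
  next
    case True
    have "word_fun rest s \<in> R" using Cons SR word_R by auto
    then have eq: "word_fun rest s = a" using lemK[of a "word_fun rest s"] True Cons by auto
    have "word_fun (a # rest) \<circ> refl s = word_fun rest"
    proof
      fix x
      have "(word_fun (a # rest) \<circ> refl s) x = refl a (word_fun rest (refl s x))" by simp
      also have "\<dots> = refl a (refl (word_fun rest s) (word_fun rest x))" by (simp add: word_conj)
      also have "\<dots> = word_fun rest x" using eq by (simp add: refl_invol)
      finally show "(word_fun (a # rest) \<circ> refl s) x = word_fun rest x" .
    qed
    then show ?thesis by (intro exI[of _ 0]) (simp del: word_fun_Cons)
  qed
qed

lemma shorter:
  assumes w: "w \<in> weyl S" and s: "s \<in> S" and np: "\<not> pos (w s)"
  shows "wlen S (w \<circ> refl s) < wlen S w"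
proof -
  obtain ws where ws: "set ws \<subseteq> S" "length ws = wlen S w" "word_fun ws = w" using wlen_ex[OF w] by blast
  obtain i where i: "i < length ws" "w \<circ> refl s = word_fun (take i ws @ drop (Suc i) ws)"
    using deletion[OF ws(1) s] np ws by auto
  have "set (take i ws @ drop (Suc i) ws) \<subseteq> S" using ws(1) set_take_subset set_drop_subset by fastforce
  then have "wlen S (w \<circ> refl s) \<le> length (take i ws @ drop (Suc i) ws)" using i wlen_le by metis
  also have "\<dots> < length ws" using i by simp
  finally show ?thesis using ws by simp
qed

lemma minrep_pos:
  assumes "u \<in> minreps S J" "j \<in> J" "J \<subseteq> S"
  shows "pos (u j)"
proof (rule ccontr)
  assume "\<not> pos (u j)"
  then have "wlen S (u \<circ> refl j) < wlen S u" using shorter assms unfolding minreps_def by blast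
  moreover have "refl j \<in> weyl J" using weyl_word[of "[j]" J] assms by simp
  ultimately show False using assms unfolding minreps_def by force
qed

end


context rsys
begin

lemma lin_add: "lin c + lin d = lin (\<lambda>t. c t + d t)"
  unfolding lin_def by (simp add: sum.distrib scaleR_add_left)

lemma lin_smult: "of_int m *\<^sub>R lin c = lin (\<lambda>t. m * c t)"
  unfolding lin_def by (simp add: scaleR_sum_right)

lemma lin_neg: "- lin c = lin (\<lambda>t. - c t)"
  using lin_smult[of "-1" c] by simp

lemma neg_of_pos: "pos x \<Longrightarrow> neg (- x)"
  unfolding pos_lin neg_lin using lin_neg by force

lemma lin_comb: "(\<Sum>t\<in>S. of_int (c t) *\<^sub>R lin (d t)) = lin (\<lambda>r. \<Sum>t\<in>S. c t * d t r)"
proof -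
  have "(\<Sum>t\<in>S. of_int (c t) *\<^sub>R lin (d t)) = (\<Sum>t\<in>S. \<Sum>r\<in>S. of_int (c t * d t r) *\<^sub>R r)"
    unfolding lin_def by (simp add: scaleR_sum_right)
  also have "\<dots> = (\<Sum>r\<in>S. \<Sum>t\<in>S. of_int (c t * d t r) *\<^sub>R r)" by (rule sum.swap)
  also have "\<dots> = lin (\<lambda>r. \<Sum>t\<in>S. c t * d t r)"
    unfolding lin_def by (simp add: scaleR_sum_left)
  finally show ?thesis .
qed

lemma zspan_word:
  assumes J: "J \<subseteq> S" and vs: "set vs \<subseteq> J" and x: "x \<in> R" "int_comb J x (\<lambda>_. True)"
  shows "word_fun vs x \<in> R \<and> int_comb J (word_fun vs x) (\<lambda>_. True)"
  using vs
proof (induction vs)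
  case Nil then show ?case using x by simp
next
  case (Cons a rest)
  let ?y = "word_fun rest x"
  have y: "?y \<in> R" "int_comb J ?y (\<lambda>_. True)" using Cons by auto
  have aS: "a \<in> S" "a \<in> J" using Cons J by auto
  then have yR: "refl a ?y \<in> R" using y SR reflR by auto
  have "pair ?y a \<in> \<int>" using y aS SR pairZ by auto
  then obtain k where k: "pair ?y a = of_int k" by (metis Ints_cases)
  obtain c where c: "?y = (\<Sum>s\<in>J. of_int (c s) *\<^sub>R s)" using y unfolding int_comb_def by blast
  have finJ: "finite J" using finS J finite_subset by blast
  have "refl a ?y = (\<Sum>s\<in>J. of_int (c s) *\<^sub>R s) - (\<Sum>t\<in>J. of_int (if t = a then k else 0) *\<^sub>R t)"
    using k c sum_delta_gen[OF finJ aS(2)] by (simp add: refl_def)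
  also have "\<dots> = (\<Sum>s\<in>J. of_int (c s - (if s = a then k else 0)) *\<^sub>R s)"
    by (simp add: sum_subtractf scaleR_diff_left)
  finally have "int_comb J (refl a ?y) (\<lambda>_. True)" unfolding int_comb_def
    by (intro exI[of _ "\<lambda>s. c s - (if s = a then k else 0)"]) simp
  then show ?case using yR by simp
qed

lemma posJ:
  assumes J: "J \<subseteq> S" and p: "pos x" and z: "int_comb J x (\<lambda>_. True)"
  shows "\<exists>c. x = lin c \<and> (\<forall>t\<in>S. c t \<ge> 0) \<and> (\<forall>t\<in>S - J. c t = 0)"
proof -
  obtain c where c: "x = lin c" "\<forall>t\<in>S. c t \<ge> 0" using p pos_lin by metis
  obtain d where d: "x = (\<Sum>s\<in>J. of_int (d s) *\<^sub>R s)" using z unfolding int_comb_def by blast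
  have xe: "x = lin (\<lambda>t. if t \<in> J then d t else 0)"
    unfolding lin_def d using finS J
    by (intro sum.mono_neutral_cong_left) auto
  have "\<forall>t\<in>S - J. c t = 0"
  proof
    fix t assume t: "t \<in> S - J"
    then have "c t = (if t \<in> J then d t else 0)" using lin_unique[of c "\<lambda>t. if t \<in> J then d t else 0" t] c(1) xe by simp
    then show "c t = 0" using t by simp
  qed
  then show ?thesis using c by blast
qed

lemma pos_image:
  assumes J: "J \<subseteq> S" and u: "linear u" and up: "\<forall>j\<in>J. pos (u j)"
    and c: "\<forall>t\<in>S. c t \<ge> 0" "\<forall>t\<in>S - J. c t = 0"
  shows "pos (u (lin c))"
proof -
  have "\<forall>j\<in>J. \<exists>e. u j = lin e \<and> (\<forall>s\<in>S. e s \<ge> 0)" using up pos_lin by metis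
  then obtain e where e: "\<forall>j\<in>J. u j = lin (e j) \<and> (\<forall>s\<in>S. e j s \<ge> 0)" by metis
  define d where "d t = (if t \<in> J then e t else (\<lambda>_. 0))" for t
  have "u (lin c) = (\<Sum>t\<in>S. of_int (c t) *\<^sub>R u t)"
    unfolding lin_def by (simp add: linear_sum[OF u] linear_scale[OF u])
  also have "\<dots> = (\<Sum>t\<in>S. of_int (c t) *\<^sub>R lin (d t))"
  proof (rule sum.cong[OF refl])
    fix t assume t: "t \<in> S"
    show "of_int (c t) *\<^sub>R u t = of_int (c t) *\<^sub>R lin (d t)"
    proof (cases "t \<in> J")
      case True then show ?thesis using e by (simp add: d_def)
    next
      case False then have "c t = 0" using c t by blast
      then show ?thesis by simp
    qed
  qed
  also have "\<dots> = lin (\<lambda>r. \<Sum>t\<in>S. c t * d t r)" by (rule lin_comb)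
  finally show ?thesis unfolding pos_lin using c e
    by (intro exI[of _ "\<lambda>r. \<Sum>t\<in>S. c t * d t r"]) (auto simp: d_def intro!: sum_nonneg)
qed

lemma minrep_unique:
  assumes J: "J \<subseteq> S" and u1: "u1 \<in> minreps S J" and v: "v \<in> weyl J" and u2: "u1 \<circ> v \<in> minreps S J"
  shows "v = id"
proof (rule ccontr)
  assume vid: "v \<noteq> id"
  obtain vs where vs: "set vs \<subseteq> J" "length vs = wlen J v" "word_fun vs = v" using wlen_ex[OF v] by blast
  have "vs \<noteq> []" using vs vid by auto
  then obtain vs' s where vsd: "vs = vs' @ [s]" using rev_exhaust by blast
  have sJ: "s \<in> J" "s \<in> S" and vs'J: "set vs' \<subseteq> J" using vs vsd J by auto
  have vv: "v = word_fun vs' \<circ> refl s" using vs vsd by (simp add: word_fun_append)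
  have pv: "pos (word_fun vs' s)"
  proof (rule ccontr)
    assume "\<not> pos (word_fun vs' s)"
    then obtain i where i: "i < length vs'" "word_fun vs' \<circ> refl s = word_fun (take i vs' @ drop (Suc i) vs')"
    proof -
      have "set vs' \<subseteq> S" using vs'J J by blast
      then show ?thesis using deletion[of vs' s] sJ \<open>\<not> pos (word_fun vs' s)\<close> that by blast
    qed
    have "set (take i vs' @ drop (Suc i) vs') \<subseteq> J" using vs'J set_take_subset set_drop_subset by fastforce
    then have "wlen J (word_fun (take i vs' @ drop (Suc i) vs')) \<le> length (take i vs' @ drop (Suc i) vs')"
      by (rule wlen_le)
    then have "wlen J v \<le> length (take i vs' @ drop (Suc i) vs')" using i(2) vv by simp
    also have "\<dots> < length vs" using i vsd by simp
    finally show False using vs by simp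
  qed
  have sR: "s \<in> R" using sJ SR by auto
  have finJ: "finite J" using finS J finite_subset by blast
  have "int_comb J s (\<lambda>_. True)"
    unfolding int_comb_def using sum_delta_gen[OF finJ sJ(1), of 1]
    by (intro exI[of _ "\<lambda>t. if t = s then 1 else 0"]) simp
  then have "int_comb J (word_fun vs' s) (\<lambda>_. True)" using zspan_word[OF J vs'J sR] by blast
  then obtain c where c: "word_fun vs' s = lin c" "\<forall>t\<in>S. c t \<ge> 0" "\<forall>t\<in>S - J. c t = 0"
    using posJ[OF J pv] by blast
  have u1w: "u1 \<in> weyl S" using u1 unfolding minreps_def by blast
  have u1l: "linear u1" using weyl_linear[OF u1w] .
  have jp: "\<forall>j\<in>J. pos (u1 j)" using minrep_pos[OF u1 _ J] by blast
  have "pos (u1 (lin c))"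
    using pos_image[OF J u1l jp c(2) c(3)] .
  then have n: "neg (- u1 (lin c))" by (rule neg_of_pos)
  have "s \<noteq> 0" using sR zR by auto
  then have rs: "refl s s = - s" by (rule refl_self)
  have e1: "word_fun vs' (- s) = - word_fun vs' s" by (rule linear_neg[OF word_linear])
  have e2: "u1 (- word_fun vs' s) = - u1 (word_fun vs' s)" by (rule linear_neg[OF u1l])
  have "(u1 \<circ> v) s = u1 (word_fun vs' (refl s s))" unfolding vv by simp
  also have "\<dots> = - u1 (lin c)" unfolding rs e1 c(1) by (rule linear_neg[OF u1l])
  finally have nn: "neg ((u1 \<circ> v) s)" using n by (simp only:)
  have u2w: "u1 \<circ> v \<in> weyl S" using u2 unfolding minreps_def by blast
  have pp: "pos ((u1 \<circ> v) s)" using minrep_pos[OF u2 sJ(1) J] .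
  have "(u1 \<circ> v) s \<in> R" by (rule weyl_R[OF u2w sR])
  from not_pos_neg[OF this pp nn] show False .
qed

lemma coset_ex1:
  assumes J: "J \<subseteq> S" and g: "g \<in> weyl S"
  shows "\<exists>!u. u \<in> minreps S J \<and> u \<in> (\<lambda>v. g \<circ> v) ` weyl J"
proof -
  let ?C = "(\<lambda>v. g \<circ> v) ` weyl J"
  have gC: "g \<in> ?C" using id_weyl[of J] by (intro image_eqI[of _ _ id]) auto
  define n where "n = (LEAST n. \<exists>u\<in>?C. wlen S u = n)"
  have "\<exists>u\<in>?C. wlen S u = n" unfolding n_def by (rule LeastI_ex) (use gC in blast)
  then obtain u where uC: "u \<in> ?C" and un: "wlen S u = n" by blast
  have uW: "u \<in> weyl S" using uC g weyl_comp weyl_mono[OF J] by blast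
  have "u \<in> minreps S J"
    unfolding minreps_def
  proof (intro CollectI conjI ballI uW)
    fix u' assume u': "u' \<in> weyl J"
    obtain v where v: "v \<in> weyl J" "u = g \<circ> v" using uC by blast
    have "u \<circ> u' = g \<circ> (v \<circ> u')" using v(2) by (simp add: comp_assoc)
    moreover have "v \<circ> u' \<in> weyl J" by (rule weyl_comp[OF v(1) u'])
    ultimately have "u \<circ> u' \<in> ?C" by blast
    then have "\<exists>w\<in>?C. wlen S w = wlen S (u \<circ> u')" by blast
    then show "wlen S u \<le> wlen S (u \<circ> u')" unfolding un n_def by (rule Least_le)
  qed
  moreover have "u1 = u2" if p: "u1 \<in> minreps S J" "u1 \<in> ?C" "u2 \<in> minreps S J" "u2 \<in> ?C" for u1 u2
  proof -
    obtain v1 v2 where v: "v1 \<in> weyl J" "u1 = g \<circ> v1" "v2 \<in> weyl J" "u2 = g \<circ> v2" using p by blast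
    obtain vs1 vs2 where vs: "set vs1 \<subseteq> J" "v1 = word_fun vs1" "set vs2 \<subseteq> J" "v2 = word_fun vs2"
      using v unfolding weyl_def by blast
    let ?v = "word_fun (rev vs1 @ vs2)"
    have vW: "?v \<in> weyl J" using vs by (intro weyl_word) auto
    have "u1 \<circ> ?v = u2"
    proof
      fix x
      show "(u1 \<circ> ?v) x = u2 x" using v(2,4) vs(2,4) by (simp add: word_fun_append word_rev_inv1)
    qed
    then have "u1 \<circ> ?v \<in> minreps S J" using p by simp
    then have "?v = id" using minrep_unique[OF J p(1) vW] by blast
    then show ?thesis using \<open>u1 \<circ> ?v = u2\<close> by simp
  qed
  ultimately show ?thesis using uC by blast
qed

lemma floorJ_in:
  assumes J: "J \<subseteq> S" and g: "g \<in> weyl S"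
  shows "floorJ S J g \<in> (\<lambda>v. g \<circ> v) ` weyl J"
  unfolding floorJ_def using theI'[OF coset_ex1[OF J g]] by blast

end


context rsys
begin

lemma pos_conj_simple_aux:
  "\<forall>b c. b \<in> R \<longrightarrow> b = lin c \<longrightarrow> (\<forall>t\<in>S. c t \<ge> 0) \<longrightarrow> nat (\<Sum>t\<in>S. c t) = n
     \<longrightarrow> (\<exists>ws a. set ws \<subseteq> S \<and> a \<in> S \<and> b = word_fun ws a)"
proof (induction n rule: less_induct)
  case (less n)
  show ?case
  proof (intro allI impI)
    fix b c assume bR: "b \<in> R" and bc: "b = lin c" and c0: "\<forall>t\<in>S. c t \<ge> 0" and hn: "nat (\<Sum>t\<in>S. c t) = n"
    have "b \<noteq> 0" using bR zR by auto
    then have bb: "b \<bullet> b > 0" by simp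
    have "b \<bullet> b = (\<Sum>t\<in>S. of_int (c t) * (b \<bullet> t))"
      by (subst (2) bc) (simp add: lin_def inner_sum_right)
    have "\<exists>s\<in>S. b \<bullet> s > 0"
    proof (rule ccontr)
      assume "\<not> ?thesis"
      then have "\<forall>t\<in>S. of_int (c t) * (b \<bullet> t) \<le> 0" using c0
        by (metis mult_nonneg_nonpos not_less of_int_0_le_iff)
      then have "(\<Sum>t\<in>S. of_int (c t) * (b \<bullet> t)) \<le> 0" by (intro sum_nonpos) auto
      then show False using bb \<open>b \<bullet> b = _\<close> by simp
    qed
    then obtain s where sS: "s \<in> S" and bs: "b \<bullet> s > 0" by blast
    show "\<exists>ws a. set ws \<subseteq> S \<and> a \<in> S \<and> b = word_fun ws a"
    proof (cases "b = s")
      case True then show ?thesis using sS by (intro exI[of _ "[]"] exI[of _ s]) simp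
    next
      case False
      obtain k where k: "refl s b = lin (\<lambda>t. c t - (if t = s then k else 0))" "pair b s = of_int k"
        using refl_lin[OF sS bR bc] by blast
      have "s \<noteq> 0" using sS SR zR by auto
      then have "s \<bullet> s > 0" by simp
      then have "pair b s > 0" using bs by (simp add: pair_eq)
      then have kp: "k > 0" using k by simp
      have pb: "pos b" unfolding pos_lin using bc c0 by blast
      have b'R: "refl s b \<in> R" using sS SR bR reflR by auto
      have "pos (refl s b)" using lemK[OF sS bR pb False] .
      then obtain e where e: "refl s b = lin e" "\<forall>t\<in>S. e t \<ge> 0" using pos_lin by metis
      have ee: "\<forall>t\<in>S. e t = c t - (if t = s then k else 0)" using lin_unique k(1) e(1) by metis
      have "(\<Sum>t\<in>S. e t) = (\<Sum>t\<in>S. c t - (if t = s then k else 0))" using ee by (intro sum.cong) auto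
      also have "\<dots> = (\<Sum>t\<in>S. c t) - k" using sS finS by (simp add: sum_subtractf)
      finally have se: "(\<Sum>t\<in>S. e t) = (\<Sum>t\<in>S. c t) - k" .
      have "(\<Sum>t\<in>S. e t) \<ge> 0" using e(2) by (intro sum_nonneg) auto
      then have lt: "nat (\<Sum>t\<in>S. e t) < n" using se kp hn by linarith
      obtain ws a where wa: "set ws \<subseteq> S" "a \<in> S" "refl s b = word_fun ws a"
        using less.IH[OF lt] b'R e by blast
      have "b = refl s (refl s b)" by (simp add: refl_invol)
      also have "\<dots> = word_fun (s # ws) a" using wa by simp
      finally show ?thesis using wa sS by (intro exI[of _ "s # ws"] exI[of _ a]) simp
    qed
  qed
qed

lemma refl_weyl:
  assumes bR: "b \<in> R" and pb: "pos b"
  shows "refl b \<in> weyl S"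
proof -
  obtain c where c: "b = lin c" "\<forall>t\<in>S. c t \<ge> 0" using pb pos_lin by metis
  obtain ws a where wa: "set ws \<subseteq> S" "a \<in> S" "b = word_fun ws a"
    using pos_conj_simple_aux bR c by blast
  have "refl b = word_fun (ws @ a # rev ws)"
  proof
    fix x
    have "word_fun (ws @ a # rev ws) x = word_fun ws (refl a (word_fun (rev ws) x))"
      by (simp add: word_fun_append)
    also have "\<dots> = refl (word_fun ws a) (word_fun ws (word_fun (rev ws) x))"
      by (simp add: word_conj)
    also have "\<dots> = refl b x" using wa by (simp add: word_rev_inv1)
    finally show "refl b x = word_fun (ws @ a # rev ws) x" by simp
  qed
  moreover have "set (ws @ a # rev ws) \<subseteq> S" using wa by auto
  ultimately show ?thesis using weyl_word by metis
qed

lemma fixJ: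
  assumes "\<forall>s\<in>J. pair Lam s = 0" "v \<in> weyl J"
  shows "v Lam = Lam"
proof -
  obtain vs where vs: "set vs \<subseteq> J" "v = word_fun vs" using assms(2) unfolding weyl_def by blast
  have "word_fun vs Lam = Lam" using vs(1)
    by (induction vs) (use assms(1) in \<open>auto simp: refl_def\<close>)
  then show ?thesis using vs by simp
qed

lemma lattice_lin: "v \<in> root_lattice S \<longleftrightarrow> (\<exists>c. v = lin c)"
  unfolding root_lattice_def int_comb_def lin_def by simp

lemma root_lattice_R: "x \<in> R \<Longrightarrow> x \<in> root_lattice S"
  using posneg unfolding lattice_lin pos_lin neg_lin by blast

lemma lattice_add: "x \<in> root_lattice S \<Longrightarrow> y \<in> root_lattice S \<Longrightarrow> x + y \<in> root_lattice S"
  unfolding lattice_lin using lin_add by metis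

lemma lattice_smult: "x \<in> root_lattice S \<Longrightarrow> of_int m *\<^sub>R x \<in> root_lattice S"
  unfolding lattice_lin using lin_smult by metis

lemma edge_step:
  assumes J: "J \<subseteq> S" and fix0: "\<forall>s\<in>J. pair Lam s = 0"
    and e: "qbg_edge R S J u b w" and sig: "\<sigma> * pair Lam b \<in> \<int>"
  shows "\<sigma> *\<^sub>R (u Lam - w Lam) \<in> root_lattice S"
proof -
  have w: "w \<in> weyl S" using e unfolding qbg_edge_def minreps_def by blast
  have b: "b \<in> R" "pos b" using e unfolding qbg_edge_def pos_roots_def pos_def by auto
  have u: "u = floorJ S J (w \<circ> refl b)" using e unfolding qbg_edge_def by blast
  have g: "w \<circ> refl b \<in> weyl S" using weyl_comp[OF w refl_weyl[OF b]] .
  obtain v where v: "v \<in> weyl J" "u = (w \<circ> refl b) \<circ> v" using floorJ_in[OF J g] u by blast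
  have "u Lam = w (refl b Lam)" using v fixJ[OF fix0 v(1)] by simp
  also have "\<dots> = w Lam - pair Lam b *\<^sub>R w b"
    using weyl_linear[OF w] by (simp add: refl_def linear_diff linear_scale)
  finally have uL: "u Lam = w Lam - pair Lam b *\<^sub>R w b" .
  obtain m where m: "\<sigma> * pair Lam b = of_int m" using sig by (metis Ints_cases)
  have "\<sigma> *\<^sub>R (u Lam - w Lam) = of_int (- m) *\<^sub>R w b" using uL m by simp
  moreover have "w b \<in> root_lattice S" using root_lattice_R weyl_R[OF w b(1)] by blast
  ultimately show ?thesis using lattice_smult by metis
qed

end

theorem lemma4p6:
  fixes R S :: "'a::euclidean_space set" and Lam :: 'a
    and x y :: "'a \<Rightarrow> 'a" and \<sigma> :: real
    and ws :: "('a \<Rightarrow> 'a) list" and bs :: "'a list"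
  assumes "root_system R" and "irreducible_rs R" and "simple_system R S"
    and "\<forall>s\<in>S. pair Lam s \<in> \<nat>"
    and "J = {s\<in>S. pair Lam s = 0}"
    and "x \<in> minreps S J" and "y \<in> minreps S J"
    and "\<sigma> \<in> \<rat>" and "0 < \<sigma>" and "\<sigma> < 1"
    and "qbg_path R S J ws bs" and "hd ws = x" and "last ws = y"
    and "\<forall>k < length bs. \<sigma> * pair Lam (bs ! k) \<in> \<int>"
  shows "\<sigma> *\<^sub>R (x Lam - y Lam) \<in> root_lattice S"
proof -
  interpret rsys R S using assms(1,3) by unfold_locales
  have J: "J \<subseteq> S" and fix0: "\<forall>s\<in>J. pair Lam s = 0" using assms(5) by auto
  have len: "length ws = Suc (length bs)" and edges: "\<forall>k < length bs. qbg_edge R S J (ws ! k) (bs ! k) (ws ! Suc k)"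
    using assms(11) unfolding qbg_path_def by auto
  let ?n = "length bs"
  have step: "\<sigma> *\<^sub>R ((ws ! k) Lam - (ws ! Suc k) Lam) \<in> root_lattice S" if "k < ?n" for k
    using edge_step[OF J fix0] edges assms(14) that by blast
  have tele: "\<sigma> *\<^sub>R ((ws ! (?n - i)) Lam - (ws ! ?n) Lam) \<in> root_lattice S" if "i \<le> ?n" for i
    using that
  proof (induction i)
    case 0 then show ?case unfolding lattice_lin by (intro exI[of _ "\<lambda>_. 0"]) (simp add: lin_def)
  next
    case (Suc i)
    let ?j = "?n - Suc i"
    have j: "?j < ?n" "Suc ?j = ?n - i" using Suc.prems by auto
    have "\<sigma> *\<^sub>R ((ws ! ?j) Lam - (ws ! ?n) Lam) =
          \<sigma> *\<^sub>R ((ws ! ?j) Lam - (ws ! Suc ?j) Lam) + \<sigma> *\<^sub>R ((ws ! (?n - i)) Lam - (ws ! ?n) Lam)"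
      using j by (simp add: algebra_simps)
    moreover have "\<sigma> *\<^sub>R ((ws ! ?j) Lam - (ws ! Suc ?j) Lam) \<in> root_lattice S" using step j by blast
    moreover have "\<sigma> *\<^sub>R ((ws ! (?n - i)) Lam - (ws ! ?n) Lam) \<in> root_lattice S" using Suc by simp
    ultimately show ?case using lattice_add by metis
  qed
  have "ws \<noteq> []" using len by auto
  then have "hd ws = ws ! 0" "last ws = ws ! ?n" using len by (auto simp: hd_conv_nth last_conv_nth)
  then show ?thesis using tele[of ?n] assms(12,13) by simp
qed

end
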